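(* Let $B$ be a subring of $D$ and let $f\in R=D[t;\sigma,\delta]$ be monic of degree $m\ge2$ and right $B$-weak invariant. Then $B\oplus Bt\oplus\dots\oplus Bt^{m-1}\subseteq\mathrm{Nuc}_r(S_f)$.
   Context: $D$ is an associative division ring, $\sigma$ a ring endomorphism of $D$, $\delta$ a left $\sigma$-derivation. $R=D[t;\sigma,\delta]$ is the skew polynomial ring with $ta=\sigma(a)t+\delta(a)$. For monic $f$ of degree $m$, $S_f$ is the set of polynomials of degree $<m$ with multiplication $g\circ h=$ remainder of $gh$ upon right division by $f$. $\mathrm{Nuc}_r(A)=\{x\in A:(yz)x=y(zx)\ \forall y,z\in A\}$. $f$ is right $B$-weak invariant if $fB\subseteq Df$ and $f(t)t=(bt+a)f(t)$ for some $a,b\in B$. *)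

theory Defs
  imports "HOL-Computational_Algebra.Polynomial"
begin

text \<open>Skew polynomials D[t;sigma,delta] are represented by their (left) coefficient
  sequences: the polynomial p stands for sum_i (coeff p i) t^i, coefficients on the left.\<close>

definition is_ring_endo :: "('a::division_ring \<Rightarrow> 'a) \<Rightarrow> bool" where
  "is_ring_endo \<sigma> \<longleftrightarrow> (\<forall>a b. \<sigma> (a + b) = \<sigma> a + \<sigma> b) \<and>
     (\<forall>a b. \<sigma> (a * b) = \<sigma> a * \<sigma> b) \<and> \<sigma> 1 = 1"

definition is_left_sigma_derivation ::
  "('a::division_ring \<Rightarrow> 'a) \<Rightarrow> ('a \<Rightarrow> 'a) \<Rightarrow> bool" where
  "is_left_sigma_derivation \<sigma> \<delta> \<longleftrightarrow> (\<forall>a b. \<delta> (a + b) = \<delta> a + \<delta> b) \<and>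
     (\<forall>a b. \<delta> (a * b) = \<sigma> a * \<delta> b + \<delta> a * b)"

text \<open>Left multiplication by t:  t (sum a_i t^i) = sum (sigma(a_i) t^(i+1) + delta(a_i) t^i).\<close>
definition skew_tmul :: "('a::division_ring \<Rightarrow> 'a) \<Rightarrow> ('a \<Rightarrow> 'a) \<Rightarrow> 'a poly \<Rightarrow> 'a poly" where
  "skew_tmul \<sigma> \<delta> p = pCons 0 (map_poly \<sigma> p) + map_poly \<delta> p"

definition skew_lsmult :: "'a::division_ring \<Rightarrow> 'a poly \<Rightarrow> 'a poly" where
  "skew_lsmult a p = map_poly (\<lambda>x. a * x) p"

definition skew_mult :: "('a::division_ring \<Rightarrow> 'a) \<Rightarrow> ('a \<Rightarrow> 'a) \<Rightarrow> 'a poly \<Rightarrow> 'a poly \<Rightarrow> 'a poly" where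
  "skew_mult \<sigma> \<delta> p q = (\<Sum>i\<le>degree p. skew_lsmult (coeff p i) ((skew_tmul \<sigma> \<delta> ^^ i) q))"

definition skew_rmod :: "('a::division_ring \<Rightarrow> 'a) \<Rightarrow> ('a \<Rightarrow> 'a) \<Rightarrow> 'a poly \<Rightarrow> 'a poly \<Rightarrow> 'a poly" where
  "skew_rmod \<sigma> \<delta> g f = (THE r. degree r < degree f \<and> (\<exists>q. g = skew_mult \<sigma> \<delta> q f + r))"

definition Sf_carrier :: "'a::division_ring poly \<Rightarrow> 'a poly set" where
  "Sf_carrier f = {g. degree g < degree f}"

definition Sf_mult :: "('a::division_ring \<Rightarrow> 'a) \<Rightarrow> ('a \<Rightarrow> 'a) \<Rightarrow> 'a poly \<Rightarrow> 'a poly \<Rightarrow> 'a poly \<Rightarrow> 'a poly" where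
  "Sf_mult \<sigma> \<delta> f g h = skew_rmod \<sigma> \<delta> (skew_mult \<sigma> \<delta> g h) f"

definition Sf_right_nucleus :: "('a::division_ring \<Rightarrow> 'a) \<Rightarrow> ('a \<Rightarrow> 'a) \<Rightarrow> 'a poly \<Rightarrow> 'a poly set" where
  "Sf_right_nucleus \<sigma> \<delta> f = {x \<in> Sf_carrier f. \<forall>y\<in>Sf_carrier f. \<forall>z\<in>Sf_carrier f.
      Sf_mult \<sigma> \<delta> f (Sf_mult \<sigma> \<delta> f y z) x = Sf_mult \<sigma> \<delta> f y (Sf_mult \<sigma> \<delta> f z x)}"

definition is_subring :: "'a::division_ring set \<Rightarrow> bool" where
  "is_subring B \<longleftrightarrow> 0 \<in> B \<and> 1 \<in> B \<and> (\<forall>x\<in>B. \<forall>y\<in>B. x + y \<in> B \<and> x - y \<in> B \<and> x * y \<in> B)"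

definition right_weak_invariant ::
  "('a::division_ring \<Rightarrow> 'a) \<Rightarrow> ('a \<Rightarrow> 'a) \<Rightarrow> 'a set \<Rightarrow> 'a poly \<Rightarrow> bool" where
  "right_weak_invariant \<sigma> \<delta> B f \<longleftrightarrow>
     (\<forall>c\<in>B. \<exists>d. skew_mult \<sigma> \<delta> f [:c:] = skew_mult \<sigma> \<delta> [:d:] f) \<and>
     (\<exists>a\<in>B. \<exists>b\<in>B. skew_mult \<sigma> \<delta> f [:0, 1:] = skew_mult \<sigma> \<delta> [:a, b:] f)"

end

theory Submission
  imports Defs
begin

locale skewring =
  fixes \<sigma> \<delta> :: "'a::division_ring \<Rightarrow> 'a"
  assumes endo: "is_ring_endo \<sigma>" and der: "is_left_sigma_derivation \<sigma> \<delta>"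
begin

abbreviation T where "T \<equiv> skew_tmul \<sigma> \<delta>"
abbreviation smul (infixl "\<odot>" 70) where "p \<odot> q \<equiv> skew_mult \<sigma> \<delta> p q"
abbreviation L where "L \<equiv> skew_lsmult"

lemma sig_add: "\<sigma> (a + b) = \<sigma> a + \<sigma> b" using endo by (simp add: is_ring_endo_def)
lemma sig_mult: "\<sigma> (a * b) = \<sigma> a * \<sigma> b" using endo by (simp add: is_ring_endo_def)
lemma sig_1: "\<sigma> 1 = 1" using endo by (simp add: is_ring_endo_def)
lemma der_add: "\<delta> (a + b) = \<delta> a + \<delta> b" using der by (simp add: is_left_sigma_derivation_def)
lemma der_mult: "\<delta> (a * b) = \<sigma> a * \<delta> b + \<delta> a * b" using der by (simp add: is_left_sigma_derivation_def)

lemma sig_0: "\<sigma> 0 = 0"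
  using sig_add[of 0 0] by simp
lemma der_0: "\<delta> 0 = 0"
  using der_add[of 0 0] by simp
lemma der_1: "\<delta> 1 = 0"
  using der_mult[of 1 1] by (simp add: sig_1)

lemma coeff_T: "coeff (T p) n = (case n of 0 \<Rightarrow> 0 | Suc k \<Rightarrow> \<sigma> (coeff p k)) + \<delta> (coeff p n)"
  by (simp add: skew_tmul_def coeff_map_poly sig_0 der_0 coeff_pCons split: nat.split)

lemma coeff_L: "coeff (L a p) n = a * coeff p n"
  by (simp add: skew_lsmult_def coeff_map_poly)

lemma T_add: "T (p + q) = T p + T q"
  by (simp add: poly_eq_iff coeff_T sig_add der_add algebra_simps split: nat.split)

lemma T_0: "T 0 = 0"
  by (simp add: poly_eq_iff coeff_T sig_0 der_0 split: nat.split)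

lemma T_sum: "T (sum g A) = (\<Sum>i\<in>A. T (g i))"
  using sum_comp_morphism[of T g A, OF T_0 T_add] by (simp add: o_def)

lemma Tpow_add: "(T^^i) (p + q) = (T^^i) p + (T^^i) q"
  by (induction i) (simp_all add: T_add)

lemma Tpow_0: "(T^^i) 0 = 0"
  by (induction i) (simp_all add: T_0)

lemma L_add: "L a (p + q) = L a p + L a q"
  by (simp add: poly_eq_iff coeff_L algebra_simps)
lemma L_add_left: "L (a + b) p = L a p + L b p"
  by (simp add: poly_eq_iff coeff_L algebra_simps)
lemma L_0: "L a 0 = 0"
  by (simp add: poly_eq_iff coeff_L)
lemma L_0_left: "L 0 p = 0"
  by (simp add: poly_eq_iff coeff_L)
lemma L_1: "L 1 p = p"
  by (simp add: poly_eq_iff coeff_L)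
lemma L_L: "L a (L b p) = L (a * b) p"
  by (simp add: poly_eq_iff coeff_L mult.assoc)
lemma L_sum: "L a (sum g A) = (\<Sum>i\<in>A. L a (g i))"
  using sum_comp_morphism[of "L a" g A, OF L_0 L_add] by (simp add: o_def)
lemma L_monom: "L a (monom b i) = monom (a * b) i"
  by (simp add: poly_eq_iff coeff_L coeff_monom)
lemma degree_L: "degree (L a p) \<le> degree p"
  by (rule degree_le) (simp add: coeff_L coeff_eq_0)

lemma T_L: "T (L a s) = L (\<sigma> a) (T s) + L (\<delta> a) s"
  by (simp add: poly_eq_iff coeff_T coeff_L sig_mult der_mult algebra_simps split: nat.split)

lemma T_monom: "T (monom b i) = monom (\<sigma> b) (Suc i) + monom (\<delta> b) i"
  by (simp add: poly_eq_iff coeff_T coeff_monom sig_0 der_0 split: nat.split)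

lemma mult_eq: "degree p \<le> N \<Longrightarrow> p \<odot> q = (\<Sum>i\<le>N. L (coeff p i) ((T^^i) q))"
  unfolding skew_mult_def
  by (rule sum.mono_neutral_left) (auto simp: coeff_eq_0 L_0_left)

lemma mult_add_left: "(p1 + p2) \<odot> q = p1 \<odot> q + p2 \<odot> q"
proof -
  let ?N = "max (degree p1) (degree p2)"
  have "degree (p1 + p2) \<le> ?N" by (rule degree_add_le_max)
  then show ?thesis
    by (simp add: mult_eq[of _ ?N] L_add_left sum.distrib)
qed

lemma mult_0_left: "0 \<odot> q = 0"
  by (simp add: skew_mult_def L_0_left)

lemma mult_minus_left: "(- p) \<odot> q = - (p \<odot> q)"
  using mult_add_left[of "-p" p q] by (simp add: mult_0_left eq_neg_iff_add_eq_0)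

lemma mult_diff_left: "(p1 - p2) \<odot> q = p1 \<odot> q - p2 \<odot> q"
  using mult_add_left[of p1 "-p2" q] by (simp add: mult_minus_left)

lemma mult_sum_left: "(sum g A) \<odot> q = (\<Sum>i\<in>A. g i \<odot> q)"
  using sum_comp_morphism[of "\<lambda>p. p \<odot> q" g A, OF mult_0_left mult_add_left] by (simp add: o_def)

lemma mult_add_right: "p \<odot> (q1 + q2) = p \<odot> q1 + p \<odot> q2"
  by (simp add: skew_mult_def Tpow_add L_add sum.distrib)

lemma mult_0_right: "p \<odot> 0 = 0"
  by (simp add: skew_mult_def Tpow_0 L_0)

lemma mult_sum_right: "p \<odot> (sum g A) = (\<Sum>i\<in>A. p \<odot> g i)"
  using sum_comp_morphism[of "\<lambda>q. p \<odot> q" g A, OF mult_0_right mult_add_right] by (simp add: o_def)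

lemma mult_monom: "monom a i \<odot> q = L a ((T^^i) q)"
proof -
  have "monom a i \<odot> q = (\<Sum>j\<le>i. L (coeff (monom a i) j) ((T^^j) q))"
    by (rule mult_eq) (rule degree_monom_le)
  also have "\<dots> = (\<Sum>j\<le>i. if j = i then L a ((T^^i) q) else 0)"
    by (rule sum.cong) (auto simp: coeff_monom L_0_left)
  finally have "monom a i \<odot> q = (\<Sum>j\<le>i. if j = i then L a ((T^^i) q) else 0)" .
  then show ?thesis by simp
qed

lemma mult_L_left: "L a q \<odot> r = L a (q \<odot> r)"
proof -
  have "L a q \<odot> r = (\<Sum>i\<le>degree q. L (coeff (L a q) i) ((T^^i) r))"
    by (rule mult_eq) (rule degree_L)
  then show ?thesis by (simp add: skew_mult_def coeff_L L_L L_sum)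
qed

lemma mult_T_left: "T q \<odot> r = T (q \<odot> r)"
proof -
  have "T q = T (\<Sum>i\<le>degree q. monom (coeff q i) i)" by (simp add: poly_as_sum_of_monoms)
  also have "\<dots> = (\<Sum>i\<le>degree q. monom (\<sigma> (coeff q i)) (Suc i) + monom (\<delta> (coeff q i)) i)"
    by (simp add: T_sum T_monom)
  finally have "T q \<odot> r = (\<Sum>i\<le>degree q. L (\<sigma> (coeff q i)) (T ((T^^i) r)) + L (\<delta> (coeff q i)) ((T^^i) r))"
    by (simp add: mult_sum_left mult_add_left mult_monom)
  also have "\<dots> = T (q \<odot> r)"
    by (simp add: skew_mult_def T_sum T_L)
  finally show ?thesis .
qed

lemma mult_Tpow_left: "(T^^i) q \<odot> r = (T^^i) (q \<odot> r)"
  by (induction i) (simp_all add: mult_T_left)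

lemma mult_assoc: "(p \<odot> q) \<odot> r = p \<odot> (q \<odot> r)"
proof -
  have "(p \<odot> q) \<odot> r = (\<Sum>i\<le>degree p. L (coeff p i) ((T^^i) q)) \<odot> r"
    by (simp only: skew_mult_def[of \<sigma> \<delta> p q])
  also have "\<dots> = (\<Sum>i\<le>degree p. L (coeff p i) ((T^^i) (q \<odot> r)))"
    by (simp add: mult_sum_left mult_L_left mult_Tpow_left)
  also have "\<dots> = p \<odot> (q \<odot> r)" by (simp only: skew_mult_def[of \<sigma> \<delta> p])
  finally show ?thesis .
qed


lemma degree_T: "degree (T p) \<le> Suc (degree p)"
  by (rule degree_le) (auto simp: coeff_T coeff_eq_0 sig_0 der_0 split: nat.split)

lemma coeff_T_top: "coeff (T p) (Suc (degree p)) = \<sigma> (lead_coeff p)"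
  by (simp add: coeff_T coeff_eq_0 der_0)

lemma Tpow_monic:
  assumes "lead_coeff f = 1"
  shows "degree ((T^^i) f) = degree f + i \<and> lead_coeff ((T^^i) f) = 1"
proof (induction i)
  case 0 then show ?case using assms by simp
next
  case (Suc i)
  let ?p = "(T^^i) f"
  have l: "lead_coeff ?p = 1" using Suc.IH by blast
  have c: "coeff (T ?p) (Suc (degree ?p)) = 1" by (simp only: coeff_T_top l sig_1)
  have "degree (T ?p) = Suc (degree ?p)"
    using degree_T[of ?p] le_degree[of "T ?p"] c by (metis le_antisym zero_neq_one)
  then show ?case using Suc c by simp
qed

lemma coeff_mult: "coeff (q \<odot> f) n = (\<Sum>i\<le>degree q. coeff q i * coeff ((T^^i) f) n)"
  by (simp add: skew_mult_def coeff_sum coeff_L)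

lemma degree_mult_le:
  assumes "lead_coeff f = 1"
  shows "degree (q \<odot> f) \<le> degree q + degree f"
proof (rule degree_le, intro allI impI)
  fix n assume n: "degree q + degree f < n"
  have "\<forall>i\<in>{..degree q}. coeff q i * coeff ((T^^i) f) n = 0"
  proof
    fix i assume "i \<in> {..degree q}"
    then have "degree ((T^^i) f) < n" using Tpow_monic[OF assms, of i] n by simp
    then show "coeff q i * coeff ((T^^i) f) n = 0" by (simp add: coeff_eq_0)
  qed
  then show "coeff (q \<odot> f) n = 0" unfolding coeff_mult by (rule sum.neutral)
qed

lemma coeff_mult_top:
  assumes "lead_coeff f = 1"
  shows "coeff (q \<odot> f) (degree q + degree f) = lead_coeff q"
proof -
  have hq: "\<forall>i\<in>{..degree q}. coeff q i * coeff ((T^^i) f) (degree q + degree f)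
          = (if i = degree q then lead_coeff q else 0)" (is "\<forall>i\<in>_. ?P i")
  proof
    fix i assume i: "i \<in> {..degree q}"
    show "coeff q i * coeff ((T^^i) f) (degree q + degree f)
          = (if i = degree q then lead_coeff q else 0)"
    proof (cases "i = degree q")
      case True
      have "coeff ((T^^i) f) (degree q + degree f) = 1"
        using Tpow_monic[OF assms, of i] True by (metis add.commute)
      then show ?thesis using True by simp
    next
      case False
      then have "degree ((T^^i) f) < degree q + degree f" using Tpow_monic[OF assms, of i] i by simp
      then show ?thesis using False by (simp add: coeff_eq_0)
    qed
  qed
  have "coeff (q \<odot> f) (degree q + degree f)
       = (\<Sum>i\<le>degree q. if i = degree q then lead_coeff q else 0)"
    unfolding coeff_mult by (intro sum.cong refl) (rule bspec[OF hq])
  then show ?thesis by simp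
qed

lemma degree_mult_monic:
  assumes "lead_coeff f = 1" "q \<noteq> 0"
  shows "degree (q \<odot> f) = degree q + degree f"
  using degree_mult_le[OF assms(1), of q] le_degree[of "q \<odot> f" "degree q + degree f"]
    coeff_mult_top[OF assms(1), of q] assms(2) by simp

lemma div_exists:
  assumes "lead_coeff f = 1" "degree f > 0"
  shows "\<exists>q r. g = q \<odot> f + r \<and> degree r < degree f"
proof (induction "degree g" arbitrary: g rule: less_induct)
  case less
  show ?case
  proof (cases "degree g < degree f")
    case True
    then show ?thesis by (intro exI[of _ 0] exI[of _ g]) (simp add: mult_0_left)
  next
    case False
    let ?n = "degree g" and ?m = "degree f"
    let ?a = "lead_coeff g" and ?k = "degree g - degree f"
    have g0: "g \<noteq> 0" using False assms(2) by auto
    then have a0: "?a \<noteq> 0" by simp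
    have dm: "degree (monom ?a ?k) = ?k" using a0 by (simp add: degree_monom_eq)
    define g' where "g' = g - monom ?a ?k \<odot> f"
    have mn: "monom ?a ?k \<noteq> 0" using a0 by simp
    have d1: "degree (monom ?a ?k \<odot> f) = ?n"
      using degree_mult_monic[OF assms(1) mn] dm False by simp
    have c1: "coeff (monom ?a ?k \<odot> f) ?n = ?a"
      using coeff_mult_top[OF assms(1), of "monom ?a ?k"] dm False by simp
    have "degree g' \<le> ?n" unfolding g'_def using degree_diff_le_max[of g "monom ?a ?k \<odot> f"] d1 by simp
    moreover have "coeff g' ?n = 0" unfolding g'_def using c1 by simp
    moreover have "?n > 0" using False assms(2) by simp
    ultimately have "degree g' < ?n"
      by (metis le_neq_implies_less leading_coeff_0_iff degree_0)
    then obtain q r where "g' = q \<odot> f + r" "degree r < ?m" using less by blast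
    then have "g = (q + monom ?a ?k) \<odot> f + r" unfolding g'_def
      by (simp add: mult_add_left algebra_simps)
    then show ?thesis using \<open>degree r < ?m\<close> by blast
  qed
qed

lemma div_unique:
  assumes "lead_coeff f = 1" "q1 \<odot> f + r1 = q2 \<odot> f + r2"
    "degree r1 < degree f" "degree r2 < degree f"
  shows "r1 = r2"
proof (cases "q1 = q2")
  case True then show ?thesis using assms(2) by simp
next
  case False
  have e: "(q1 - q2) \<odot> f = r2 - r1" using assms(2) by (simp add: mult_diff_left algebra_simps)
  have "degree ((q1 - q2) \<odot> f) \<ge> degree f"
    using degree_mult_monic[OF assms(1)] False by simp
  moreover have "degree (r2 - r1) < degree f"
    using degree_diff_le_max[of r2 r1] assms(3,4) by simp
  ultimately show ?thesis using e by simp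
qed

lemma rmod_eq:
  assumes "lead_coeff f = 1" "degree r < degree f" "g = q \<odot> f + r"
  shows "skew_rmod \<sigma> \<delta> g f = r"
  unfolding skew_rmod_def
proof (rule the_equality)
  show "degree r < degree f \<and> (\<exists>q. g = q \<odot> f + r)" using assms by blast
next
  fix r' assume "degree r' < degree f \<and> (\<exists>q. g = q \<odot> f + r')"
  then obtain q' where "degree r' < degree f" "g = q' \<odot> f + r'" by blast
  then show "r' = r" using div_unique[OF assms(1), of q' r' q r] assms by simp
qed

lemma rmod_spec:
  assumes "lead_coeff f = 1" "degree f > 0"
  shows "degree (skew_rmod \<sigma> \<delta> g f) < degree f \<and> (\<exists>q. g = q \<odot> f + skew_rmod \<sigma> \<delta> g f)"
proof -
  obtain q r where "g = q \<odot> f + r" "degree r < degree f" using div_exists[OF assms] by blast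
  then show ?thesis using rmod_eq[OF assms(1)] by metis
qed

lemma nucleus:
  assumes "lead_coeff f = 1" "degree f > 0" "degree x < degree f" "f \<odot> x = h \<odot> f"
  shows "x \<in> Sf_right_nucleus \<sigma> \<delta> f"
  unfolding Sf_right_nucleus_def Sf_carrier_def Sf_mult_def
proof (intro CollectI conjI ballI)
  show "degree x < degree f" by fact
  fix y z
  let ?rm = "\<lambda>g. skew_rmod \<sigma> \<delta> g f"
  obtain q1 where q1: "y \<odot> z = q1 \<odot> f + ?rm (y \<odot> z)" using rmod_spec[OF assms(1,2)] by blast
  obtain q3 where q3: "?rm (y \<odot> z) \<odot> x = q3 \<odot> f + ?rm (?rm (y \<odot> z) \<odot> x)"
    and d3: "degree (?rm (?rm (y \<odot> z) \<odot> x)) < degree f" using rmod_spec[OF assms(1,2)] by blast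
  obtain q2 where q2: "z \<odot> x = q2 \<odot> f + ?rm (z \<odot> x)" using rmod_spec[OF assms(1,2)] by blast
  obtain q4 where q4: "y \<odot> ?rm (z \<odot> x) = q4 \<odot> f + ?rm (y \<odot> ?rm (z \<odot> x))"
    and d4: "degree (?rm (y \<odot> ?rm (z \<odot> x))) < degree f" using rmod_spec[OF assms(1,2)] by blast
  have "(y \<odot> z) \<odot> x = (q1 \<odot> f) \<odot> x + ?rm (y \<odot> z) \<odot> x"
    by (subst q1) (simp add: mult_add_left)
  also have "\<dots> = (q1 \<odot> h + q3) \<odot> f + ?rm (?rm (y \<odot> z) \<odot> x)"
    by (subst q3) (simp add: mult_assoc assms(4) mult_add_left)
  finally have e1: "(y \<odot> z) \<odot> x = (q1 \<odot> h + q3) \<odot> f + ?rm (?rm (y \<odot> z) \<odot> x)" .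
  have "y \<odot> (z \<odot> x) = y \<odot> (q2 \<odot> f) + y \<odot> ?rm (z \<odot> x)"
    by (subst q2) (simp add: mult_add_right)
  also have "\<dots> = (y \<odot> q2 + q4) \<odot> f + ?rm (y \<odot> ?rm (z \<odot> x))"
    by (subst q4) (simp add: mult_assoc mult_add_left)
  finally have e2: "y \<odot> (z \<odot> x) = (y \<odot> q2 + q4) \<odot> f + ?rm (y \<odot> ?rm (z \<odot> x))" .
  show "?rm (?rm (y \<odot> z) \<odot> x) = ?rm (y \<odot> ?rm (z \<odot> x))"
    using div_unique[OF assms(1) _ d3 d4] e1 e2 mult_assoc by metis
qed

lemma Tpow_monom1: "(T^^i) (monom 1 k) = monom 1 (k + i)"
  by (induction i) (simp_all add: T_monom sig_1 der_1)

lemma monom1_mult: "monom 1 i \<odot> q = (T^^i) q"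
  by (simp add: mult_monom L_1)

lemma mult_one_right: "p \<odot> monom 1 0 = p"
proof -
  have "p \<odot> monom 1 0 = (\<Sum>i\<le>degree p. monom (coeff p i) i)"
    unfolding skew_mult_def by (simp add: Tpow_monom1 L_monom)
  then show ?thesis by (simp add: poly_as_sum_of_monoms)
qed

lemma mult_one_left: "monom 1 0 \<odot> p = p"
  using monom1_mult[of 0 p] by simp

lemma const_mult: "[:c:] \<odot> q = L c q"
  using mult_monom[of c 0 q] by (simp add: monom_0)

lemma fx_in_Rf:
  assumes inv: "right_weak_invariant \<sigma> \<delta> B f" and xB: "\<forall>i. coeff x i \<in> B"
  shows "\<exists>h. f \<odot> x = h \<odot> f"
proof -
  obtain a b where ab: "f \<odot> [:0,1:] = [:a,b:] \<odot> f"
    using inv unfolding right_weak_invariant_def by blast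
  have cB: "\<forall>c\<in>B. \<exists>d. f \<odot> [:c:] = [:d:] \<odot> f"
    using inv unfolding right_weak_invariant_def by blast
  have t: "[:0,1:] = monom 1 1" by (simp add: monom_Suc monom_0 One_nat_def)
  have step: "monom 1 i \<odot> monom 1 1 = monom 1 (Suc i)" for i
    by (simp add: monom1_mult Tpow_monom1)
  have pw: "\<exists>h. f \<odot> monom 1 i = h \<odot> f" for i
  proof (induction i)
    case 0 show ?case by (rule exI[of _ "monom 1 0"]) (simp only: mult_one_right mult_one_left)
  next
    case (Suc i)
    then obtain h where h: "f \<odot> monom 1 i = h \<odot> f" by blast
    have "f \<odot> monom 1 (Suc i) = f \<odot> (monom 1 i \<odot> [:0,1:])" by (simp only: t step)
    also have "\<dots> = (f \<odot> monom 1 i) \<odot> [:0,1:]" by (simp only: mult_assoc)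
    also have "\<dots> = (h \<odot> f) \<odot> [:0,1:]" by (simp only: h)
    also have "\<dots> = (h \<odot> [:a,b:]) \<odot> f" by (simp only: mult_assoc ab)
    finally show ?case by blast
  qed
  have mc: "\<exists>h. f \<odot> monom c i = h \<odot> f" if c: "c \<in> B" for c i
  proof -
    obtain d where d: "f \<odot> [:c:] = [:d:] \<odot> f" using cB c by blast
    obtain h where h: "f \<odot> monom 1 i = h \<odot> f" using pw by blast
    have "monom c i = [:c:] \<odot> monom 1 i" by (simp add: const_mult L_monom)
    then have "f \<odot> monom c i = ([:d:] \<odot> h) \<odot> f"
      by (simp add: mult_assoc[symmetric] d) (simp add: mult_assoc h)
    then show ?thesis by blast
  qed
  have "\<forall>i. \<exists>h. f \<odot> monom (coeff x i) i = h \<odot> f"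
  proof
    fix i show "\<exists>h. f \<odot> monom (coeff x i) i = h \<odot> f" using mc[OF xB[rule_format]] .
  qed
  from choice[OF this] obtain H where H0: "\<forall>i. f \<odot> monom (coeff x i) i = H i \<odot> f" by (elim exE)
  have H: "f \<odot> monom (coeff x i) i = H i \<odot> f" for i using H0 by (rule spec)
  have "f \<odot> x = f \<odot> (\<Sum>i\<le>degree x. monom (coeff x i) i)" by (simp add: poly_as_sum_of_monoms)
  also have "\<dots> = (\<Sum>i\<le>degree x. H i) \<odot> f" by (simp add: mult_sum_right mult_sum_left H)
  finally show ?thesis by blast
qed
end

theorem mainTheorem4:
  fixes \<sigma> \<delta> :: "'a::division_ring \<Rightarrow> 'a" and B :: "'a set" and f :: "'a poly"
  assumes "is_ring_endo \<sigma>"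
    and "is_left_sigma_derivation \<sigma> \<delta>"
    and "is_subring B"
    and "lead_coeff f = 1"
    and "degree f \<ge> 2"
    and "right_weak_invariant \<sigma> \<delta> B f"
  shows "{p. degree p < degree f \<and> (\<forall>i. coeff p i \<in> B)} \<subseteq> Sf_right_nucleus \<sigma> \<delta> f"
proof
  interpret skewring \<sigma> \<delta> using assms(1,2) by unfold_locales
  fix x assume "x \<in> {p. degree p < degree f \<and> (\<forall>i. coeff p i \<in> B)}"
  then have x: "degree x < degree f" "\<forall>i. coeff x i \<in> B" by auto
  obtain h where "skew_mult \<sigma> \<delta> f x = skew_mult \<sigma> \<delta> h f" using fx_in_Rf[OF assms(6) x(2)] by blast
  then show "x \<in> Sf_right_nucleus \<sigma> \<delta> f"
    using nucleus[OF assms(4) _ x(1)] assms(5) by simp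
qed

end
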